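(* The vectors $\{\Lambda_1,\dots,\Lambda_d\}$ form a basis for the space $\Psi^{-1}(\mathcal{D}\cap (I_{\mathcal{C}})_2)$.
   Context: Let $P_d$ be a convex polygon with $d\ge 4$ vertices $v_1,\dots,v_d$ (indices mod $d$) over a field $\mathbb{K}$ with no three edge lines concurrent. Set ${\bf v}_i=(v_i,1)$, ${\bf n}_i={\bf v}_i\times{\bf v}_{i+1}$, $\alpha_j=|{\bf v}_{j-1}\,{\bf v}_j\,{\bf v}_{j+1}|$. In $S=\mathbb{K}[x_1,\ldots,x_d]$ let $\tau=\sum_i x_i{\bf v}_i$, $I_{\mathcal{C}}=\langle\tau_1,\tau_2,\tau_3\rangle$, $\mathcal{D}\subseteq S_2$ the span of diagonal monomials $x_ix_j$ ($j\notin\{i-1,i,i+1\}$), $\Psi:S_1^3\to(I_{\mathcal{C}})_2$ the map $F\mapsto F\cdot\tau$ (scalar product), and $\Lambda_k=\frac{x_{k+1}}{\alpha_{k+1}}{\bf n}_{k+1}-\frac{x_k}{\alpha_k}{\bf n}_{k-1}\in S_1^3$. *)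

theory Defs
  imports Main
begin

(* Vertices are indexed 0..d-1 (the paper uses 1..d); all indices are read mod d. *)

type_synonym 'a vec3 = "'a \<times> 'a \<times> 'a"

definition det3 :: "'a::comm_ring_1 vec3 \<Rightarrow> 'a vec3 \<Rightarrow> 'a vec3 \<Rightarrow> 'a" where
  "det3 p q r = (case p of (a1, a2, a3) \<Rightarrow> case q of (b1, b2, b3) \<Rightarrow> case r of (c1, c2, c3) \<Rightarrow>
      a1 * (b2 * c3 - b3 * c2) - a2 * (b1 * c3 - b3 * c1) + a3 * (b1 * c2 - b2 * c1))"

definition cross3 :: "'a::comm_ring_1 vec3 \<Rightarrow> 'a vec3 \<Rightarrow> 'a vec3" where
  "cross3 p q = (case p of (a1, a2, a3) \<Rightarrow> case q of (b1, b2, b3) \<Rightarrow>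
      (a2 * b3 - a3 * b2, a3 * b1 - a1 * b3, a1 * b2 - a2 * b1))"

definition comp3 :: "'a::zero vec3 \<Rightarrow> nat \<Rightarrow> 'a" where
  "comp3 p c = (if c = 0 then fst p else if c = 1 then fst (snd p) else if c = 2 then snd (snd p) else 0)"

definition hvert :: "nat \<Rightarrow> (nat \<Rightarrow> 'a \<times> 'a) \<Rightarrow> nat \<Rightarrow> 'a::comm_ring_1 vec3" where
  "hvert d v i = (fst (v (i mod d)), snd (v (i mod d)), 1)"

definition nvec :: "nat \<Rightarrow> (nat \<Rightarrow> 'a \<times> 'a) \<Rightarrow> nat \<Rightarrow> 'a::comm_ring_1 vec3" where
  "nvec d v i = cross3 (hvert d v i) (hvert d v (Suc i))"

definition alpha :: "nat \<Rightarrow> (nat \<Rightarrow> 'a \<times> 'a) \<Rightarrow> nat \<Rightarrow> 'a::comm_ring_1" where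
  "alpha d v j = det3 (hvert d v (j + d - 1)) (hvert d v j) (hvert d v (Suc j))"

text \<open>Convex polygon with vertices \<open>v_0,\<dots>,v_{d-1}\<close> in cyclic order (either orientation):
  every other vertex lies strictly on the same side of each edge line.\<close>
definition convex_polygon :: "nat \<Rightarrow> (nat \<Rightarrow> 'a::linordered_field \<times> 'a) \<Rightarrow> bool" where
  "convex_polygon d v \<longleftrightarrow> 3 \<le> d \<and>
     ((\<forall>i<d. \<forall>k<d. k \<noteq> i \<and> k \<noteq> Suc i mod d \<longrightarrow> det3 (hvert d v i) (hvert d v (Suc i)) (hvert d v k) > 0) \<or>
      (\<forall>i<d. \<forall>k<d. k \<noteq> i \<and> k \<noteq> Suc i mod d \<longrightarrow> det3 (hvert d v i) (hvert d v (Suc i)) (hvert d v k) < 0))"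

definition no_three_edge_lines_concurrent :: "nat \<Rightarrow> (nat \<Rightarrow> 'a::comm_ring_1 \<times> 'a) \<Rightarrow> bool" where
  "no_three_edge_lines_concurrent d v \<longleftrightarrow>
     (\<forall>i<d. \<forall>j<d. \<forall>k<d. i \<noteq> j \<and> j \<noteq> k \<and> i \<noteq> k \<longrightarrow> det3 (nvec d v i) (nvec d v j) (nvec d v k) \<noteq> 0)"

text \<open>Polynomials in \<open>S = K[x_0,\<dots>,x_{d-1}]\<close> of degree 1 and 2 are represented by coefficients:
  a linear form is \<open>a :: nat \<Rightarrow> 'a\<close> (coefficient of \<open>x_i\<close>, zero for \<open>i \<ge> d\<close>);
  a quadratic form is \<open>Q :: nat \<Rightarrow> nat \<Rightarrow> 'a\<close>, where \<open>Q i j\<close> (for \<open>i \<le> j < d\<close>) is the coefficient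
  of the monomial \<open>x_i x_j\<close> and all other entries are zero.
  An element of \<open>S_1^3\<close> is \<open>F :: nat \<Rightarrow> nat \<Rightarrow> 'a\<close>, \<open>F c\<close> being the c-th component (c = 0,1,2).\<close>

definition S1cube :: "nat \<Rightarrow> (nat \<Rightarrow> nat \<Rightarrow> 'a::zero) set" where
  "S1cube d = {F. \<forall>c i. (3 \<le> c \<or> d \<le> i) \<longrightarrow> F c i = 0}"

definition qmul :: "(nat \<Rightarrow> 'a::comm_semiring_0) \<Rightarrow> (nat \<Rightarrow> 'a) \<Rightarrow> nat \<Rightarrow> nat \<Rightarrow> 'a" where
  "qmul a b = (\<lambda>i j. if i < j then a i * b j + a j * b i else if i = j then a i * b i else 0)"

text \<open>\<open>\<tau>_c = \<Sum>_i x_i (v_i,1)_c\<close>.\<close>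
definition tau :: "nat \<Rightarrow> (nat \<Rightarrow> 'a \<times> 'a) \<Rightarrow> nat \<Rightarrow> nat \<Rightarrow> 'a::comm_ring_1" where
  "tau d v c = (\<lambda>i. if i < d then comp3 (hvert d v i) c else 0)"

text \<open>\<open>\<Psi>(F) = F \<cdot> \<tau>\<close>.\<close>
definition Psi :: "nat \<Rightarrow> (nat \<Rightarrow> 'a \<times> 'a) \<Rightarrow> (nat \<Rightarrow> nat \<Rightarrow> 'a) \<Rightarrow> nat \<Rightarrow> nat \<Rightarrow> 'a::comm_ring_1" where
  "Psi d v F = (\<lambda>i j. \<Sum>c<3. qmul (F c) (tau d v c) i j)"

definition IC2 :: "nat \<Rightarrow> (nat \<Rightarrow> 'a \<times> 'a) \<Rightarrow> (nat \<Rightarrow> nat \<Rightarrow> 'a::comm_ring_1) set" where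
  "IC2 d v = {Q. \<exists>G\<in>S1cube d. Q = (\<lambda>i j. \<Sum>c<3. qmul (G c) (tau d v c) i j)}"

definition diag_mono :: "nat \<Rightarrow> nat \<Rightarrow> nat \<Rightarrow> bool" where
  "diag_mono d i j \<longleftrightarrow> i < j \<and> j < d \<and> j \<noteq> Suc i \<and> \<not> (i = 0 \<and> j = d - 1)"

definition Dspace :: "nat \<Rightarrow> (nat \<Rightarrow> nat \<Rightarrow> 'a::zero) set" where
  "Dspace d = {Q. \<forall>i j. \<not> diag_mono d i j \<longrightarrow> Q i j = 0}"

text \<open>\<open>\<Lambda>_k = (x_{k+1}/\<alpha>_{k+1}) n_{k+1} - (x_k/\<alpha>_k) n_{k-1}\<close>.\<close>
definition Lambda :: "nat \<Rightarrow> (nat \<Rightarrow> 'a \<times> 'a) \<Rightarrow> nat \<Rightarrow> nat \<Rightarrow> nat \<Rightarrow> 'a::field" where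
  "Lambda d v k = (\<lambda>c i.
      (if i = Suc k mod d then comp3 (nvec d v (Suc k)) c / alpha d v (Suc k) else 0)
    - (if i = k mod d then comp3 (nvec d v (k + d - 1)) c / alpha d v k else 0))"

definition PsiPre :: "nat \<Rightarrow> (nat \<Rightarrow> 'a \<times> 'a) \<Rightarrow> (nat \<Rightarrow> nat \<Rightarrow> 'a::comm_ring_1) set" where
  "PsiPre d v = {F \<in> S1cube d. Psi d v F \<in> Dspace d \<inter> IC2 d v}"

definition is_basis_family :: "nat \<Rightarrow> (nat \<Rightarrow> nat \<Rightarrow> nat \<Rightarrow> 'a::field) \<Rightarrow> (nat \<Rightarrow> nat \<Rightarrow> 'a) set \<Rightarrow> bool" where
  "is_basis_family n B W \<longleftrightarrow>
     (\<forall>k<n. B k \<in> W) \<and>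
     (\<forall>a. (\<lambda>c i. \<Sum>k<n. a k * B k c i) = (\<lambda>c i. 0) \<longrightarrow> (\<forall>k<n. a k = 0)) \<and>
     (\<forall>F\<in>W. \<exists>a. F = (\<lambda>c i. \<Sum>k<n. a k * B k c i))"

end

theory Submission imports Defs begin

definition dotc :: "(nat \<Rightarrow> 'a::comm_ring_1) \<Rightarrow> 'a vec3 \<Rightarrow> 'a" where
  "dotc f p = f 0 * fst p + f 1 * fst (snd p) + f 2 * snd (snd p)"

definition pv :: "nat \<Rightarrow> nat \<Rightarrow> nat" where
  "pv d i = (if i = 0 then d - 1 else i - 1)"

lemma sum3: "(\<Sum>c<(3::nat). g c) = g 0 + g 1 + (g 2 :: 'a::comm_monoid_add)"
  by (simp add: numeral_3_eq_3 numeral_2_eq_2 lessThan_Suc add.commute add.left_commute)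

lemma hvert_mod[simp]: "hvert d v (x mod d) = hvert d v x"
  by (simp add: hvert_def)
lemma hvert_add[simp]: "hvert d v (x + d) = hvert d v x"
  by (simp add: hvert_def)
lemma hvert_Suc_mod[simp]: "hvert d v (Suc (x mod d)) = hvert d v (Suc x)"
  by (simp add: hvert_def mod_Suc_eq)

lemma dotc_cross: "dotc (comp3 (cross3 a b)) p = det3 a b p"
  by (cases a; cases b; cases p) (simp add: dotc_def comp3_def cross3_def det3_def algebra_simps)

lemma det3_cyc: "det3 a b c = det3 b c (a::'a::comm_ring_1 vec3)"
  by (cases a; cases b; cases c) (simp add: det3_def algebra_simps)

lemma det3_rep[simp]: "det3 a b b = 0" "det3 a b a = 0" "det3 a a b = (0::'a::comm_ring_1)"
  by (cases a; cases b; simp add: det3_def algebra_simps)+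

lemma hvert_pv: "i < d \<Longrightarrow> hvert d v (i + d - 1) = hvert d v (pv d i)"
proof (cases "i = 0")
  case False
  assume "i < d"
  then have "i + d - 1 = (i - 1) + d" using False by simp
  then have "(i + d - 1) mod d = i - 1" using \<open>i<d\<close> by (metis less_imp_diff_less mod_add_self2 mod_less)
  then show ?thesis using False \<open>i<d\<close> by (simp add: pv_def hvert_def)
qed (simp add: pv_def)

lemma Suc_mod_iff: "k < d \<Longrightarrow> i < d \<Longrightarrow> (i = Suc k mod d) = (k = pv d i)"
  by (cases "Suc k = d") (auto simp: pv_def)

lemma alpha_k: "k < d \<Longrightarrow> alpha d v k = det3 (hvert d v (pv d k)) (hvert d v k) (hvert d v (Suc k))"
  using hvert_pv[of k d v] by (simp add: alpha_def)

lemma alpha_Suc: "0 < d \<Longrightarrow> alpha d v (Suc k) = det3 (hvert d v k) (hvert d v (Suc k)) (hvert d v (Suc (Suc k)))"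
proof -
  assume "0 < d"
  then have "Suc k + d - 1 = k + d" by simp
  then show ?thesis by (simp add: alpha_def)
qed

lemma nvec_prev: "0 < d \<Longrightarrow> k < d \<Longrightarrow> nvec d v (k + d - 1) = cross3 (hvert d v (pv d k)) (hvert d v k)"
proof -
  assume "0 < d" "k < d"
  then have "Suc (k + d - 1) = k + d" by simp
  then show ?thesis using \<open>k<d\<close> hvert_pv[of k d v] by (simp add: nvec_def)
qed

lemma alpha_nz:
  assumes "convex_polygon d v" "3 \<le> d" "k < d"
  shows "alpha d v k \<noteq> 0"
proof -
  have a: "alpha d v k = det3 (hvert d v k) (hvert d v (Suc k)) (hvert d v (pv d k))"
    using assms by (simp add: alpha_k det3_cyc)
  have "pv d k < d" "pv d k \<noteq> k" "pv d k \<noteq> Suc k mod d"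
    using assms by (auto simp: pv_def convex_polygon_def mod_Suc)
  then show ?thesis using assms(1,3) unfolding a convex_polygon_def
    by (metis less_irrefl)
qed

lemma alpha_Suc_nz:
  assumes "convex_polygon d v" "3 \<le> d" "k < d"
  shows "alpha d v (Suc k) \<noteq> 0"
proof (cases "Suc k < d")
  case True then show ?thesis using alpha_nz assms by blast
next
  case False
  then have "Suc k = d" using assms by simp
  have "alpha d v (Suc k) = alpha d v 0"
  proof -
    have e1: "d + d - 1 = (d - 1) + d" "d = 0 + d" "Suc d = 1 + d" using assms by auto
    have "hvert d v (d + d - 1) = hvert d v (d - 1)" by (subst e1(1)) simp
    moreover have "hvert d v d = hvert d v 0" by (simp add: hvert_def)
    moreover have "hvert d v (Suc d) = hvert d v 1" using assms by (simp add: hvert_def mod_Suc)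
    ultimately show ?thesis using \<open>Suc k = d\<close> by (simp add: alpha_def)
  qed
  then show ?thesis using alpha_nz[OF assms(1,2), of 0] assms by simp
qed

lemma dotc_if: "dotc (\<lambda>c. (if P then comp3 x c / a else 0) - (if Q then comp3 y c / b else 0)) p
   = (if P then dotc (comp3 x) p / a else 0) - (if Q then dotc (comp3 y) p / b else (0::'a::field))"
  by (cases P; cases Q) (simp_all add: dotc_def comp3_def add_divide_distrib diff_divide_distrib algebra_simps)

lemma dotc_Lambda: "dotc (\<lambda>c. Lambda d v k c i) p =
   (if i = Suc k mod d then det3 (hvert d v (Suc k)) (hvert d v (Suc (Suc k))) p / alpha d v (Suc k) else 0)
 - (if i = k mod d then det3 (hvert d v (k+d-1)) (hvert d v (Suc (k+d-1))) p / alpha d v k else 0)"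
  unfolding Lambda_def dotc_if by (simp add: dotc_cross nvec_def)

lemma Psi_lt: "i < j \<Longrightarrow> j < d \<Longrightarrow> Psi d v F i j = dotc (\<lambda>c. F c i) (hvert d v j) + dotc (\<lambda>c. F c j) (hvert d v i)"
  by (simp add: Psi_def qmul_def tau_def sum3 dotc_def comp3_def algebra_simps)

lemma Psi_eq: "i < d \<Longrightarrow> Psi d v F i i = dotc (\<lambda>c. F c i) (hvert d v i)"
  by (simp add: Psi_def qmul_def tau_def sum3 dotc_def comp3_def algebra_simps)

lemma Psi_out: "F \<in> S1cube d \<Longrightarrow> \<not> (i \<le> j \<and> j < d) \<Longrightarrow> Psi d v F i j = 0"
  by (auto simp: Psi_def qmul_def tau_def sum3 S1cube_def)

lemma decomp: "c < 3 \<Longrightarrow> det3 u v w * f c = dotc f u * comp3 (cross3 v w) c + dotc f v * comp3 (cross3 w u) c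
   + dotc f w * comp3 (cross3 u v) c"
  apply (cases u; cases v; cases w)
  apply (auto simp: less_Suc_eq numeral_3_eq_3 dotc_def comp3_def cross3_def det3_def algebra_simps)
  done

lemma Lambda_mem:
  assumes conv: "convex_polygon d v" and d4: "4 \<le> d" and kd: "k < d"
  shows "Lambda d v k \<in> PsiPre d v"
proof -
  define P where "P = hvert d v (pv d k)"
  define Q where "Q = hvert d v k"
  define R where "R = hvert d v (Suc k)"
  define T where "T = hvert d v (Suc (Suc k))"
  have d0: "0 < d" "3 \<le> d" using d4 by auto
  have sk: "Suc (k + d - 1) = k + d" using d0 by simp
  have hQ: "hvert d v (Suc (k + d - 1)) = Q" unfolding sk Q_def by simp
  have hP: "hvert d v (k + d - 1) = P" unfolding P_def using hvert_pv[OF kd] .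
  have a1: "alpha d v k = det3 P Q R" unfolding P_def Q_def R_def using alpha_k[OF kd] .
  have a2: "alpha d v (Suc k) = det3 Q R T" unfolding T_def Q_def R_def using alpha_Suc[OF d0(1)] .
  have nz1: "det3 P Q R \<noteq> 0" using alpha_nz[OF conv d0(2) kd] a1 by simp
  have nz2: "det3 Q R T \<noteq> 0" using alpha_Suc_nz[OF conv d0(2) kd] a2 by simp
  have kmod: "k mod d = k" using kd by simp
  have dL: "dotc (\<lambda>c. Lambda d v k c i) p = (if i = Suc k mod d then det3 R T p / det3 Q R T else 0)
      - (if i = k then det3 P Q p / det3 P Q R else 0)" if "i < d" for i p
    using dotc_Lambda[of d v k i p] unfolding hQ hP a1 a2 kmod R_def T_def by simp
  have rtq: "det3 R T Q = det3 Q R T" by (rule det3_cyc[of Q R T, symmetric])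
  have skk: "Suc k mod d \<noteq> k"
  proof (cases "Suc k = d")
    case True then show ?thesis using d0 by simp
  next
    case False then show ?thesis using kd by simp
  qed
  have skl: "Suc k mod d < d" using d0 by simp
  have inS: "Lambda d v k \<in> S1cube d"
    unfolding S1cube_def
  proof (intro CollectI allI impI)
    fix c i :: nat assume "3 \<le> c \<or> d \<le> i"
    then show "Lambda d v k c i = 0"
    proof
      assume "3 \<le> c" then show ?thesis by (simp add: Lambda_def comp3_def)
    next
      assume di: "d \<le> i"
      have "i \<noteq> Suc k mod d" using skl di by linarith
      moreover have "i \<noteq> k mod d" using kd di by simp
      ultimately show ?thesis by (simp add: Lambda_def)
    qed
  qed
  have diag: "Psi d v (Lambda d v k) i i = 0" if "i < d" for i
    unfolding Psi_eq[OF that] dL[OF that] using skk by (auto simp: R_def T_def Q_def P_def)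
  have adj: "dotc (\<lambda>c. Lambda d v k c i) (hvert d v (Suc i)) + dotc (\<lambda>c. Lambda d v k c (Suc i)) (hvert d v i) = 0"
    if "Suc i < d" for i
  proof (cases "i = k")
    case True
    then have "Suc k mod d = Suc k" using that by simp
    then show ?thesis unfolding dL[OF that] dL[OF Suc_lessD[OF that]] using True that nz1 nz2 rtq
      by (simp add: Q_def R_def)
  next
    case False
    note F = False
    show ?thesis
    proof (cases "Suc i = k")
      case True
      then have "P = hvert d v i" unfolding P_def pv_def by auto
      moreover have "i \<noteq> Suc k mod d" using True d0 kd by (cases "Suc k = d") auto
      ultimately show ?thesis unfolding dL[OF that] dL[OF Suc_lessD[OF that]] using True that skk F
        by (simp add: Q_def)
    next
      case False
      have "Suc i \<noteq> Suc k mod d" using False F that d0 kd by (cases "Suc k = d") auto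
      then show ?thesis unfolding dL[OF that] dL[OF Suc_lessD[OF that]] using False F that
        by (auto simp: T_def R_def)
    qed
  qed
  have wrap: "dotc (\<lambda>c. Lambda d v k c 0) (hvert d v (d - 1)) + dotc (\<lambda>c. Lambda d v k c (d - 1)) (hvert d v 0) = 0"
  proof (cases "k = d - 1")
    case True
    then have "Suc k mod d = 0" "Suc k = d" using d0 by auto
    moreover have "hvert d v d = hvert d v 0" by (simp add: hvert_def)
    ultimately show ?thesis unfolding dL[OF d0(1)] dL[of "d - 1", OF diff_less[OF zero_less_one d0(1)]] using True d0 nz1 nz2 rtq
      by (simp add: Q_def R_def)
  next
    case False
    then have sm: "Suc k mod d = Suc k" using kd by simp
    have "hvert d v (Suc (d - 1)) = hvert d v 0" using d0 by (simp add: hvert_def)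
    moreover have "d - 1 = Suc k \<Longrightarrow> hvert d v (Suc (Suc k)) = hvert d v 0"
    proof -
      assume "d - 1 = Suc k" then have "Suc (Suc k) = d" using d0 by simp
      then show ?thesis by (simp add: hvert_def)
    qed
    ultimately show ?thesis unfolding dL[OF d0(1)] dL[of "d - 1", OF diff_less[OF zero_less_one d0(1)]] sm using False d0
      by (auto simp: T_def P_def pv_def)
  qed
  have "Psi d v (Lambda d v k) \<in> Dspace d"
    unfolding Dspace_def
  proof (intro CollectI allI impI)
    fix i j assume nd: "\<not> diag_mono d i j"
    show "Psi d v (Lambda d v k) i j = 0"
    proof (cases "i \<le> j \<and> j < d")
      case False then show ?thesis using Psi_out[OF inS] by blast
    next
      case True
      show ?thesis
      proof (cases "i = j")
        case True then show ?thesis using diag \<open>i \<le> j \<and> j < d\<close> by simp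
      next
        case False
        then have ij: "i < j" "j < d" using True by auto
        then have "j = Suc i \<or> (i = 0 \<and> j = d - 1)" using nd unfolding diag_mono_def by auto
        then show ?thesis
        proof
          assume "j = Suc i" then show ?thesis using adj[of i] ij Psi_lt[of i j d v "Lambda d v k"] by simp
        next
          assume "i = 0 \<and> j = d - 1" then show ?thesis using wrap ij Psi_lt[of i j d v "Lambda d v k"] by simp
        qed
      qed
    qed
  qed
  moreover have "Psi d v (Lambda d v k) \<in> IC2 d v"
    unfolding IC2_def Psi_def using inS by blast
  ultimately show ?thesis unfolding PsiPre_def using inS by blast
qed


lemma dotc_sum: "dotc (\<lambda>c. \<Sum>k\<in>A. a k * g k c) p = (\<Sum>k\<in>A. a k * dotc (g k) p)"
  unfolding dotc_def by (simp add: sum.distrib sum_distrib_left distrib_left mult_ac)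

lemma Lambda_indep:
  assumes conv: "convex_polygon d v" and d4: "4 \<le> d"
    and z: "(\<lambda>c i. \<Sum>k<d. a k * Lambda d v k c i) = (\<lambda>c i. 0)" and id: "i < d"
  shows "a i = 0"
proof -
  have d0: "0 < d" "3 \<le> d" using d4 by auto
  have "(\<lambda>c. \<Sum>k<d. a k * Lambda d v k c i) = (\<lambda>c. 0)" using fun_cong[OF z] by (simp add: fun_eq_iff)
  then have "dotc (\<lambda>c. \<Sum>k<d. a k * Lambda d v k c i) (hvert d v (Suc i)) = 0" by (simp add: dotc_def)
  then have s0: "(\<Sum>k<d. a k * dotc (\<lambda>c. Lambda d v k c i) (hvert d v (Suc i))) = 0"
    by (simp add: dotc_sum)
  have trm: "a k * dotc (\<lambda>c. Lambda d v k c i) (hvert d v (Suc i)) = (if k = i then - a i else 0)"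
    if "k < d" for k
  proof -
    have sk: "Suc (k + d - 1) = k + d" using d0 by simp
    have e1: "hvert d v (Suc (k + d - 1)) = hvert d v k" unfolding sk by simp
    have "(i = k mod d) = (k = i)" using that by auto
    moreover have "i = Suc k mod d \<Longrightarrow> hvert d v (Suc i) = hvert d v (Suc (Suc k))" by simp
    moreover have "alpha d v i \<noteq> 0" using alpha_nz[OF conv d0(2) id] .
    ultimately show ?thesis unfolding dotc_Lambda e1 by (auto simp: alpha_def)
  qed
  have "(\<Sum>k<d. a k * dotc (\<lambda>c. Lambda d v k c i) (hvert d v (Suc i))) = (\<Sum>k<d. if k = i then - a i else 0)"
    apply (rule sum.cong[OF refl]) apply (rule trm) apply simp done
  also have "\<dots> = - a i" using id by simp
  finally show ?thesis using s0 by simp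
qed

lemma pv_lt: "0 < d \<Longrightarrow> pv d i < d \<or> i = 0 \<Longrightarrow> i < d \<Longrightarrow> pv d i < d"
  by (auto simp: pv_def)

lemma hvert_Suc_pv: "i < d \<Longrightarrow> hvert d v (Suc (pv d i)) = hvert d v i"
  by (cases "i = 0") (auto simp: pv_def hvert_def)

lemma nvec_Suc_pv: "i < d \<Longrightarrow> nvec d v (Suc (pv d i)) = nvec d v i"
proof (cases "i = 0")
  case True
  assume "i < d"
  then have "Suc (pv d i) = 0 + d" using True by (simp add: pv_def)
  then show ?thesis using True by (simp add: nvec_def hvert_def mod_Suc)
qed (auto simp: pv_def)

lemma alpha_Suc_pv: "i < d \<Longrightarrow> 3 \<le> d \<Longrightarrow> alpha d v (Suc (pv d i)) = alpha d v i"
proof (cases "i = 0")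
  case True
  assume "i < d" "3 \<le> d"
  then have e: "Suc (pv d i) = d" using True by (simp add: pv_def)
  have e1: "d + d - 1 = (d - 1) + d" using \<open>3 \<le> d\<close> by auto
  have "hvert d v (d + d - 1) = hvert d v (d - 1)" by (subst e1) simp
  moreover have "hvert d v d = hvert d v 0" by (simp add: hvert_def)
  moreover have "hvert d v (Suc d) = hvert d v 1" using \<open>3 \<le> d\<close> by (simp add: hvert_def mod_Suc)
  ultimately show ?thesis unfolding e using True \<open>3 \<le> d\<close> by (simp add: alpha_def)
qed (auto simp: pv_def)

lemma Lambda_span:
  assumes conv: "convex_polygon d v" and d4: "4 \<le> d" and F: "F \<in> PsiPre d v"
  shows "F = (\<lambda>c i. \<Sum>k<d. (- dotc (\<lambda>c. F c k) (hvert d v (Suc k))) * Lambda d v k c i)"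
    (is "F = (\<lambda>c i. \<Sum>k<d. ?a k * _)")
proof (intro ext)
  fix c i
  have d0: "0 < d" "3 \<le> d" using d4 by auto
  have FS: "F \<in> S1cube d" and FD: "Psi d v F \<in> Dspace d" using F unfolding PsiPre_def by auto
  show "F c i = (\<Sum>k<d. ?a k * Lambda d v k c i)"
  proof (cases "3 \<le> c \<or> d \<le> i")
    case True
    have "Lambda d v k c i = 0" if "k < d" for k
      using Lambda_mem[OF conv d4 that] True unfolding PsiPre_def S1cube_def by auto
    moreover have "F c i = 0" using FS True unfolding S1cube_def by auto
    ultimately show ?thesis by simp
  next
    case False
    then have c3: "c < 3" and id: "i < d" by auto
    have pvd: "pv d i < d" using id d0 by (auto simp: pv_def)
    define u where "u = hvert d v (pv d i)"
    define w where "w = hvert d v (Suc i)"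
    define f where "f = (\<lambda>c. F c i)"
    have termk: "?a k * Lambda d v k c i =
       (if k = pv d i then ?a (pv d i) * comp3 (nvec d v i) c / alpha d v i else 0)
     - (if k = i then ?a i * comp3 (nvec d v (i + d - 1)) c / alpha d v i else 0)" if "k < d" for k
    proof -
      have "(i = Suc k mod d) = (k = pv d i)" using Suc_mod_iff[OF that id] .
      moreover have "(i = k mod d) = (k = i)" using that by auto
      ultimately show ?thesis unfolding Lambda_def
        using nvec_Suc_pv[OF id, of v] alpha_Suc_pv[OF id d0(2), of v]
        by (auto simp: algebra_simps)
    qed
    have "(\<Sum>k<d. ?a k * Lambda d v k c i) = (\<Sum>k<d. (if k = pv d i then ?a (pv d i) * comp3 (nvec d v i) c / alpha d v i else 0)
     - (if k = i then ?a i * comp3 (nvec d v (i + d - 1)) c / alpha d v i else 0))"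
      apply (rule sum.cong[OF refl]) apply (rule termk) apply simp done
    also have "\<dots> = ?a (pv d i) * comp3 (nvec d v i) c / alpha d v i - ?a i * comp3 (nvec d v (i + d - 1)) c / alpha d v i"
      using pvd id by (simp add: sum_subtractf)
    finally have S: "(\<Sum>k<d. ?a k * Lambda d v k c i) = ?a (pv d i) * comp3 (nvec d v i) c / alpha d v i - ?a i * comp3 (nvec d v (i + d - 1)) c / alpha d v i" .
    have h0: "dotc f (hvert d v i) = 0"
    proof -
      have "\<not> diag_mono d i i" by (simp add: diag_mono_def)
      then have "Psi d v F i i = 0" using FD unfolding Dspace_def by blast
      then show ?thesis using Psi_eq[OF id, of v F] unfolding f_def by simp
    qed
    have hc: "dotc (\<lambda>c. F c (pv d i)) (hvert d v i) + dotc f u = 0"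
    proof (cases "i = 0")
      case True
      have "\<not> diag_mono d 0 (d - 1)" by (simp add: diag_mono_def)
      then have "Psi d v F 0 (d - 1) = 0" using FD unfolding Dspace_def by blast
      then show ?thesis using Psi_lt[of 0 "d - 1" d v F] d0 True unfolding f_def u_def
        by (simp add: pv_def)
    next
      case False
      have "\<not> diag_mono d (i - 1) i" using False by (simp add: diag_mono_def)
      then have "Psi d v F (i - 1) i = 0" using FD unfolding Dspace_def by blast
      then show ?thesis using Psi_lt[of "i - 1" i d v F] id False unfolding f_def u_def
        by (simp add: pv_def)
    qed
    have ap: "?a (pv d i) = dotc f u" using hc hvert_Suc_pv[OF id, of v] by (simp add: algebra_simps)
    have ai: "?a i = - dotc f w" unfolding f_def w_def by simp
    have nv: "nvec d v i = cross3 (hvert d v i) w" unfolding nvec_def w_def by simp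
    have np: "nvec d v (i + d - 1) = cross3 u (hvert d v i)" unfolding u_def using nvec_prev[OF d0(1) id] .
    have al: "alpha d v i = det3 u (hvert d v i) w" unfolding u_def w_def using alpha_k[OF id] .
    have anz: "det3 u (hvert d v i) w \<noteq> 0" using alpha_nz[OF conv d0(2) id] al by simp
    have dc: "det3 u (hvert d v i) w * f c = dotc f u * comp3 (cross3 (hvert d v i) w) c
        + dotc f w * comp3 (cross3 u (hvert d v i)) c"
      using decomp[OF c3, of u "hvert d v i" w f] h0 by simp
    have fin: "x = A * N1 / D - (- B) * N2 / D" if "D \<noteq> 0" "D * x = A * N1 + B * N2"
      for x A B N1 N2 D :: 'a
      using that by (simp add: field_simps)
    have fc: "f c = dotc f u * comp3 (nvec d v i) c / alpha d v i - (- dotc f w) * comp3 (nvec d v (i + d - 1)) c / alpha d v i"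
      unfolding nv np al by (rule fin[OF anz dc])
    have ap': "- dotc (\<lambda>c. F c (pv d i)) (hvert d v (Suc (pv d i))) = dotc (\<lambda>c. F c i) u"
      using ap unfolding f_def by simp
    show ?thesis unfolding S ap' using fc unfolding f_def w_def .
  qed
qed

theorem lemma3p6:
  fixes d :: nat and v :: "nat \<Rightarrow> 'a::linordered_field \<times> 'a"
  assumes "4 \<le> d"
    and "convex_polygon d v"
    and "no_three_edge_lines_concurrent d v"
  shows "is_basis_family d (Lambda d v) (PsiPre d v)"
  unfolding is_basis_family_def
proof (intro conjI allI impI ballI)
  fix k assume "k < d" then show "Lambda d v k \<in> PsiPre d v" using Lambda_mem[OF assms(2,1)] by blast
next
  fix a k assume "(\<lambda>c i. \<Sum>k<d. a k * Lambda d v k c i) = (\<lambda>c i. 0)" "k < d"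
  then show "a k = 0" by (rule Lambda_indep[OF assms(2,1)])
next
  fix F assume "F \<in> PsiPre d v"
  then have "F = (\<lambda>c i. \<Sum>k<d. (\<lambda>k. - dotc (\<lambda>c. F c k) (hvert d v (Suc k))) k * Lambda d v k c i)"
    using Lambda_span[OF assms(2,1)] by simp
  then show "\<exists>a. F = (\<lambda>c i. \<Sum>k<d. a k * Lambda d v k c i)"
    by (rule exI[where x="\<lambda>k. - dotc (\<lambda>c. F c k) (hvert d v (Suc k))"])
qed

end
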